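(* Let $a_0=1$, let $a_1,a_2,\ldots>0$ and $b_1,b_2,\ldots\in\mathbb{R}$, and let $A$ be the associated semi-infinite Jacobi matrix. For $T\in\mathbb{N}$ let $C_T$ be the $T\times T$ matrix with entries $\{C_T\}_{ij}=\int_{\mathbb{R}}\mathcal{T}_i(\lambda)\mathcal{T}_j(\lambda)\,d\rho(\lambda)$, $i,j=1,\ldots,T$, where $\rho$ is any solution of the Hamburger moment problem with moments $s_k=(A^ke_1,e_1)$, and let $\gamma_T$ be the largest eigenvalue of $C_T$. If there exists a constant $M\in\mathbb{R}$ with $\gamma_T\leqslant M$ for all $T=1,2,\ldots$, then $A$ is in the limit point case, i.e. the moment problem associated with $\{s_k\}$ is determinate.
   Context: Here $e_1=(1,0,0,\ldots)$ and $A$ acts on finitely supported sequences by $(A\theta)_1=b_1\theta_1+a_1\theta_2$, $(A\theta)_n=a_n\theta_{n+1}+a_{n-1}\theta_{n-1}+b_n\theta_n$ for $n\ge2$. A solution of the moment problem is a Borel measure $\rho$ on $\mathbb{R}$ with $\int\lambda^k\,d\rho=s_k$ for all $k\ge0$; determinate means the solution is unique, which is equivalent to $A$ (on finitely supported sequences in $l_2$) having deficiency indices $(0,0)$ (limit point case). The polynomials $\mathcal{T}_k$ are defined by $\mathcal{T}_0=0$, $\mathcal{T}_1=1$, $\mathcal{T}_{t+1}(\lambda)+\mathcal{T}_{t-1}(\lambda)-\lambda\mathcal{T}_t(\lambda)=0$; $C_T$ does not depend on the choice of $\rho$. *)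

theory Defs
  imports "HOL-Probability.Probability" "Jordan_Normal_Form.Char_Poly"
begin

text \<open>Sequences are indexed from 1; index 0 of a sequence is unused (kept 0).
  The Jacobi operator A acting on (finitely supported) sequences.\<close>
definition jacobi_op :: "(nat \<Rightarrow> real) \<Rightarrow> (nat \<Rightarrow> real) \<Rightarrow> (nat \<Rightarrow> real) \<Rightarrow> (nat \<Rightarrow> real)" where
  "jacobi_op a b \<theta> n =
     (if n = 0 then 0
      else if n = 1 then b 1 * \<theta> 1 + a 1 * \<theta> 2
      else a n * \<theta> (n + 1) + a (n - 1) * \<theta> (n - 1) + b n * \<theta> n)"

definition e1 :: "nat \<Rightarrow> real" where
  "e1 n = (if n = 1 then 1 else 0)"

definition jacobi_moment :: "(nat \<Rightarrow> real) \<Rightarrow> (nat \<Rightarrow> real) \<Rightarrow> nat \<Rightarrow> real" where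
  "jacobi_moment a b k = ((jacobi_op a b ^^ k) e1) 1"

definition moment_solution :: "(nat \<Rightarrow> real) \<Rightarrow> real measure \<Rightarrow> bool" where
  "moment_solution s \<rho> \<longleftrightarrow> sets \<rho> = sets borel \<and>
     (\<forall>k. integrable \<rho> (\<lambda>x. x ^ k) \<and> (\<integral>x. x ^ k \<partial>\<rho>) = s k)"

fun Tpoly :: "nat \<Rightarrow> real \<Rightarrow> real" where
  "Tpoly 0 x = 0"
| "Tpoly (Suc 0) x = 1"
| "Tpoly (Suc (Suc t)) x = x * Tpoly (Suc t) x - Tpoly t x"

text \<open>C_T as a T x T matrix (0-based JNF indices i,j correspond to entries i+1, j+1).\<close>
definition C_mat :: "real measure \<Rightarrow> nat \<Rightarrow> real mat" where
  "C_mat \<rho> T = mat T T (\<lambda>(i, j). \<integral>x. Tpoly (i + 1) x * Tpoly (j + 1) x \<partial>\<rho>)"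

definition largest_eigenvalue :: "real mat \<Rightarrow> real" where
  "largest_eigenvalue M = Max {k. eigenvalue M k}"

end

theory Submission
  imports Defs
begin


lemma bil_expand:
  fixes c :: "nat \<Rightarrow> nat \<Rightarrow> real"
  assumes sym: "\<And>i j. i < n \<Longrightarrow> j < n \<Longrightarrow> c i j = c j i"
  shows "(\<Sum>i<n. \<Sum>j<n. (x i + t * w i) * c i j * (x j + t * w j))
     = (\<Sum>i<n. \<Sum>j<n. x i * c i j * x j) + 2 * t * (\<Sum>i<n. w i * (\<Sum>j<n. c i j * x j))
       + t^2 * (\<Sum>i<n. \<Sum>j<n. w i * c i j * w j)"
proof -
  have s: "(\<Sum>i<n. \<Sum>j<n. x i * c i j * w j) = (\<Sum>i<n. \<Sum>j<n. w i * c i j * x j)"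
    apply (subst sum.swap)
    apply (intro sum.cong refl)
    using sym by (simp add: mult.commute)
  have "(\<Sum>i<n. \<Sum>j<n. (x i + t * w i) * c i j * (x j + t * w j))
     = (\<Sum>i<n. \<Sum>j<n. x i * c i j * x j) + t * (\<Sum>i<n. \<Sum>j<n. x i * c i j * w j)
       + t * (\<Sum>i<n. \<Sum>j<n. w i * c i j * x j) + t^2 * (\<Sum>i<n. \<Sum>j<n. w i * c i j * w j)"
    by (simp add: sum.distrib sum_distrib_left algebra_simps power2_eq_square)
  also have "\<dots> = (\<Sum>i<n. \<Sum>j<n. x i * c i j * x j) + 2 * t * (\<Sum>i<n. w i * (\<Sum>j<n. c i j * x j))
       + t^2 * (\<Sum>i<n. \<Sum>j<n. w i * c i j * w j)"
    unfolding s by (simp add: sum_distrib_left algebra_simps)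
  finally show ?thesis .
qed

lemma sq_expand:
  fixes x w :: "nat \<Rightarrow> real"
  shows "(\<Sum>i<n. (x i + t * w i)^2) = (\<Sum>i<n. (x i)^2) + 2 * t * (\<Sum>i<n. w i * x i) + t^2 * (\<Sum>i<n. (w i)^2)"
  by (simp add: sum.distrib sum_distrib_left algebra_simps power2_eq_square)

lemma quad_nonpos:
  fixes N K :: real
  assumes "\<And>t. 2 * t * N + t^2 * K \<le> 0" and "N \<ge> 0"
  shows "N = 0"
proof (rule ccontr)
  assume "N \<noteq> 0" then have N: "N > 0" using assms by auto
  define t where "t = N / (\<bar>K\<bar> + 1)"
  have t: "t > 0" using N by (simp add: t_def add_pos_nonneg)
  have "2 * t * N + t^2 * K \<le> 0" by (rule assms)
  then have "t * (2 * N + t * K) \<le> 0" by (simp add: power2_eq_square algebra_simps)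
  then have "2 * N + t * K \<le> 0" using t by (simp add: mult_le_0_iff)
  moreover have "t * \<bar>K\<bar> < N"
    using N by (simp add: t_def field_simps)
  moreover have "- (t * K) \<le> t * \<bar>K\<bar>" using t by (metis abs_ge_minus_self abs_mult abs_of_pos)
  ultimately show False using N by linarith
qed



lemma compact_box:
  "compact (Pi\<^sub>E UNIV (\<lambda>i::nat. if i < n then {-1..1::real} else {0}))"
proof -
  have "compactin (product_topology (\<lambda>i. euclidean) UNIV)
          (Pi\<^sub>E UNIV (\<lambda>i::nat. if i < n then {-1..1::real} else {0}))"
    by (subst compactin_PiE) auto
  then show ?thesis by (simp add: euclidean_product_topology)
qed

lemma exists_max_quad:
  fixes c :: "nat \<Rightarrow> nat \<Rightarrow> real"
  assumes "k < n"
  shows "\<exists>x0. (\<forall>i\<ge>n. x0 i = 0) \<and> (\<Sum>i<n. (x0 i)^2) = 1 \<and>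
     (\<forall>y. (\<forall>i\<ge>n. y i = 0) \<and> (\<Sum>i<n. (y i)^2) = 1 \<longrightarrow>
        (\<Sum>i<n. \<Sum>j<n. y i * c i j * y j) \<le> (\<Sum>i<n. \<Sum>j<n. x0 i * c i j * x0 j))"
proof -
  define S where "S = {x::nat\<Rightarrow>real. (\<forall>i\<ge>n. x i = 0) \<and> (\<Sum>i<n. (x i)^2) = 1}"
  define B where "B = Pi\<^sub>E UNIV (\<lambda>i::nat. if i < n then {-1..1::real} else {0})"
  have SB: "S = B \<inter> {x. (\<Sum>i<n. (x i)^2) = 1}"
  proof (rule equalityI; rule subsetI)
    fix x assume x: "x \<in> S"
    have "x i \<in> {-1..1}" if "i < n" for i
    proof -
      have "(x i)^2 \<le> (\<Sum>i<n. (x i)^2)"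
        by (rule member_le_sum) (use that in auto)
      then have "(x i)^2 \<le> 1^2" using x by (simp add: S_def)
      then have "\<bar>x i\<bar> \<le> 1" using abs_le_square_iff by (metis abs_one)
      then show ?thesis by auto
    qed
    then show "x \<in> B \<inter> {x. (\<Sum>i<n. (x i)^2) = 1}" using x by (auto simp: S_def B_def)
  next
    fix x assume "x \<in> B \<inter> {x. (\<Sum>i<n. (x i)^2) = 1}"
    then show "x \<in> S" unfolding S_def B_def by (auto simp: PiE_iff split: if_splits) (metis not_le singletonD)
  qed
  have "closed {x::nat\<Rightarrow>real. (\<Sum>i<n. (x i)^2) = 1}"
    by (intro closed_Collect_eq continuous_intros continuous_on_product_then_coordinatewise continuous_on_id)
  then have cS: "compact S" unfolding SB B_def using compact_box by auto
  have "(\<Sum>i<n. (if i = k then 1 else (0::real))^2) = (\<Sum>i<n. if i = k then 1 else 0)"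
    by (intro sum.cong) auto
  also have "\<dots> = 1" using assms by simp
  finally have sq: "(\<Sum>i<n. (if i = k then 1 else (0::real))^2) = 1" .
  have neS: "(\<lambda>i. if i = k then 1 else 0) \<in> S" using assms by (simp add: S_def sq)
  have "continuous_on S (\<lambda>y. \<Sum>i<n. \<Sum>j<n. y i * c i j * y j)"
    by (intro continuous_intros continuous_on_product_then_coordinatewise continuous_on_id)
  from continuous_attains_sup[OF cS _ this] neS obtain x0 where "x0 \<in> S"
    "\<forall>y\<in>S. (\<Sum>i<n. \<Sum>j<n. y i * c i j * y j) \<le> (\<Sum>i<n. \<Sum>j<n. x0 i * c i j * x0 j)" by blast
  then show ?thesis unfolding S_def by blast
qed



lemma rayleigh:
  fixes C :: "real mat"
  assumes C: "C \<in> carrier_mat n n"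
    and sym: "\<And>i j. i < n \<Longrightarrow> j < n \<Longrightarrow> C $$ (i, j) = C $$ (j, i)"
    and k: "k < n"
  shows "C $$ (k, k) \<le> largest_eigenvalue C"
proof -
  define c where "c i j = C $$ (i, j)" for i j
  have symc: "\<And>i j. i < n \<Longrightarrow> j < n \<Longrightarrow> c i j = c j i" using sym by (simp add: c_def)
  define Q where "Q y = (\<Sum>i<n. \<Sum>j<n. y i * c i j * y j)" for y :: "nat \<Rightarrow> real"
  define N where "N y = (\<Sum>i<n. (y i)^2)" for y :: "nat \<Rightarrow> real"
  obtain x0 where x0z: "\<forall>i\<ge>n. x0 i = 0" and x0N: "N x0 = 1"
    and x0max: "\<And>y. (\<forall>i\<ge>n. y i = 0) \<Longrightarrow> N y = 1 \<Longrightarrow> Q y \<le> Q x0"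
    using exists_max_quad[OF k, of c] unfolding Q_def N_def by blast
  define \<mu> where "\<mu> = Q x0"
  have hom: "Q z \<le> \<mu> * N z" for z
  proof (cases "N z = 0")
    case True
    then have "\<forall>i\<in>{..<n}. (z i)^2 = 0" unfolding N_def
      by (subst sum_nonneg_eq_0_iff[symmetric]) auto
    then have "Q z = 0" unfolding Q_def by auto
    then show ?thesis using True by simp
  next
    case False
    then have Np: "N z > 0" unfolding N_def by (metis order_le_neq_trans sum_nonneg zero_le_power2)
    define s where "s = sqrt (N z)"
    have s: "s > 0" "s^2 = N z" using Np by (auto simp: s_def)
    define y where "y i = (if i < n then z i / s else 0)" for i
    have "N y = N z / s^2" unfolding N_def y_def
      by (simp add: power_divide sum_divide_distrib)
    then have Ny: "N y = 1" using s Np by simp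
    have "Q y = Q z / s^2" unfolding Q_def y_def
      by (simp add: sum_divide_distrib power2_eq_square)
    moreover have "Q y \<le> \<mu>" unfolding \<mu>_def by (rule x0max) (auto simp: y_def Ny)
    ultimately have "Q z / N z \<le> \<mu>" using s by simp
    then show ?thesis using Np by (simp add: divide_le_eq mult.commute)
  qed
  define w where "w i = (\<Sum>j<n. c i j * x0 j) - \<mu> * x0 i" for i
  have "\<And>t. 2 * t * N w + t^2 * (Q w - \<mu> * N w) \<le> 0"
  proof -
    fix t :: real
    have "Q (\<lambda>i. x0 i + t * w i) \<le> \<mu> * N (\<lambda>i. x0 i + t * w i)" by (rule hom)
    also have "N (\<lambda>i. x0 i + t * w i) = 1 + 2 * t * (\<Sum>i<n. w i * x0 i) + t^2 * N w"
      unfolding N_def sq_expand using x0N by (simp add: N_def)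
    also have "Q (\<lambda>i. x0 i + t * w i) = \<mu> + 2 * t * (\<Sum>i<n. w i * (\<Sum>j<n. c i j * x0 j)) + t^2 * Q w"
      using bil_expand[OF symc, where x=x0 and t=t and w=w] by (simp add: Q_def \<mu>_def)
    finally have *: "\<mu> + 2 * t * (\<Sum>i<n. w i * (\<Sum>j<n. c i j * x0 j)) + t^2 * Q w
        \<le> \<mu> * (1 + 2 * t * (\<Sum>i<n. w i * x0 i) + t^2 * N w)" .
    have wi: "\<And>i. w i = (\<Sum>j<n. c i j * x0 j) - \<mu> * x0 i" by (simp add: w_def)
    have "N w = (\<Sum>i<n. w i * ((\<Sum>j<n. c i j * x0 j) - \<mu> * x0 i))"
      unfolding N_def power2_eq_square by (simp only: wi[symmetric])
    also have "\<dots> = (\<Sum>i<n. w i * (\<Sum>j<n. c i j * x0 j)) - \<mu> * (\<Sum>i<n. w i * x0 i)"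
      by (simp add: right_diff_distrib sum_subtractf sum_distrib_left mult.left_commute)
    finally have eqA: "(\<Sum>i<n. w i * (\<Sum>j<n. c i j * x0 j)) = N w + \<mu> * (\<Sum>i<n. w i * x0 i)" by simp
    show "2 * t * N w + t^2 * (Q w - \<mu> * N w) \<le> 0" using * unfolding eqA
      by (simp add: algebra_simps)
  qed
  then have Nw: "N w = 0" by (rule quad_nonpos) (simp add: N_def sum_nonneg)
  then have w0: "\<And>i. i < n \<Longrightarrow> w i = 0" unfolding N_def
    by (subst (asm) sum_nonneg_eq_0_iff) auto
  define v where "v = vec n x0"
  have v: "v \<in> carrier_vec n" by (simp add: v_def)
  have v0: "v \<noteq> 0\<^sub>v n"
  proof
    assume "v = 0\<^sub>v n"
    then have "\<And>i. i < n \<Longrightarrow> x0 i = 0" unfolding v_def by (metis index_vec index_zero_vec(1))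
    then have "N x0 = 0" unfolding N_def by simp
    then show False using x0N by simp
  qed
  have "C *\<^sub>v v = \<mu> \<cdot>\<^sub>v v"
  proof (rule eq_vecI)
    fix i assume i: "i < dim_vec (\<mu> \<cdot>\<^sub>v v)"
    then have i': "i < n" by (simp add: v_def)
    have "(C *\<^sub>v v) $ i = (\<Sum>j<n. c i j * x0 j)"
      using C i' unfolding v_def c_def
      by (simp add: scalar_prod_def lessThan_atLeast0 row_def)
    also have "\<dots> = \<mu> * x0 i" using w0[OF i'] by (simp add: w_def)
    finally show "(C *\<^sub>v v) $ i = (\<mu> \<cdot>\<^sub>v v) $ i" using i' by (simp add: v_def)
  qed (use C in \<open>simp add: v_def\<close>)
  then have ev: "eigenvalue C \<mu>" unfolding eigenvalue_def eigenvector_def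
    using v v0 C by auto
  have fin: "finite {k. eigenvalue C k}"
  proof -
    have "char_poly C \<noteq> 0" using degree_monic_char_poly[OF C] by auto
    then have "finite {x. poly (char_poly C) x = 0}" by (rule poly_roots_finite)
    then show ?thesis using eigenvalue_root_char_poly[OF C] by simp
  qed
  define e where "e = (\<lambda>i. if i = k then 1 else (0::real))"
  have "Q e = (\<Sum>i<n. if i = k then c k k else 0)"
    unfolding Q_def
  proof (rule sum.cong[OF refl])
    fix i assume "i \<in> {..<n}"
    show "(\<Sum>j<n. e i * c i j * e j) = (if i = k then c k k else 0)"
    proof (cases "i = k")
      case True
      have "(\<Sum>j<n. e i * c i j * e j) = (\<Sum>j<n. if j = k then c k k else 0)"
        by (intro sum.cong) (auto simp: True e_def)
      then show ?thesis using k True by simp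
    qed (simp add: e_def)
  qed
  then have "C $$ (k, k) = Q e" using k by (simp add: c_def)
  also have "\<dots> \<le> \<mu>" unfolding \<mu>_def
  proof (rule x0max)
    have "(\<Sum>i<n. (e i)^2) = (\<Sum>i<n. if i = k then 1 else 0)"
      by (intro sum.cong) (auto simp: e_def)
    also have "\<dots> = 1" using k by simp
    finally show "N e = 1" unfolding N_def .
  qed (use k in \<open>auto simp: e_def\<close>)
  also have "\<mu> \<le> largest_eigenvalue C" unfolding largest_eigenvalue_def
    using fin ev by (simp add: Max_ge)
  finally show ?thesis .
qed



lemma Tpoly_lower_aux:
  fixes x :: real
  assumes "\<bar>x\<bar> \<ge> 2"
  shows "\<bar>Tpoly n x\<bar> + 1 \<le> \<bar>Tpoly (Suc n) x\<bar> \<and> real n \<le> \<bar>Tpoly n x\<bar>"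
proof (induction n)
  case 0
  then show ?case by simp
next
  case (Suc n)
  have e: "Tpoly (Suc (Suc n)) x = x * Tpoly (Suc n) x - Tpoly n x" by simp
  have "\<bar>x * Tpoly (Suc n) x\<bar> \<ge> 2 * \<bar>Tpoly (Suc n) x\<bar>"
    unfolding abs_mult using assms by (intro mult_right_mono) auto
  then have "\<bar>Tpoly (Suc (Suc n)) x\<bar> \<ge> 2 * \<bar>Tpoly (Suc n) x\<bar> - \<bar>Tpoly n x\<bar>"
    unfolding e by linarith
  then show ?case using Suc by auto
qed

lemma Tpoly_lower: "\<bar>x\<bar> \<ge> 2 \<Longrightarrow> real n \<le> \<bar>Tpoly n x\<bar>"
  using Tpoly_lower_aux by blast

lemma Tpoly_upper_aux:
  fixes x :: real
  shows "\<bar>Tpoly n x\<bar> \<le> (1 + \<bar>x\<bar>)^n \<and> \<bar>Tpoly (Suc n) x\<bar> \<le> (1 + \<bar>x\<bar>)^Suc n"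
proof (induction n)
  case 0
  then show ?case by simp
next
  case (Suc n)
  have e: "Tpoly (Suc (Suc n)) x = x * Tpoly (Suc n) x - Tpoly n x" by simp
  have a: "\<bar>x * Tpoly (Suc n) x\<bar> \<le> \<bar>x\<bar> * (1 + \<bar>x\<bar>)^Suc n"
    unfolding abs_mult using Suc by (intro mult_left_mono) auto
  have b: "(1 + \<bar>x\<bar>)^n \<le> (1 + \<bar>x\<bar>)^Suc n" by (intro power_increasing) auto
  have "\<bar>Tpoly (Suc (Suc n)) x\<bar> \<le> \<bar>x\<bar> * (1 + \<bar>x\<bar>)^Suc n + (1 + \<bar>x\<bar>)^Suc n"
    unfolding e using a b Suc by linarith
  also have "\<dots> = (1 + \<bar>x\<bar>)^Suc (Suc n)" by (simp add: algebra_simps)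
  finally show ?case using Suc by simp
qed


lemma Tpoly_sq_bound:
  fixes x :: real
  shows "Tpoly n x * Tpoly n x \<le> 4^n * (1 + x^(2*n))"
proof -
  have "Tpoly n x * Tpoly n x = \<bar>Tpoly n x\<bar>^2" by (simp add: power2_eq_square)
  also have "\<dots> \<le> ((1 + \<bar>x\<bar>)^n)^2"
    using Tpoly_upper_aux[of n x] by (intro power_mono) auto
  also have "\<dots> = (1 + \<bar>x\<bar>)^(2*n)" by (simp add: power_mult[symmetric] mult.commute)
  also have "\<dots> \<le> 4^n * (1 + x^(2*n))"
  proof (cases "\<bar>x\<bar> \<le> 1")
    case True
    have "(1 + \<bar>x\<bar>)^(2*n) \<le> 2^(2*n)" using True by (intro power_mono) auto
    also have "\<dots> = 4^n" by (simp add: power_mult)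
    also have "\<dots> \<le> 4^n * (1 + x^(2*n))" by (simp add: power_mult)
    finally show ?thesis .
  next
    case False
    have "(1 + \<bar>x\<bar>)^(2*n) \<le> (2 * \<bar>x\<bar>)^(2*n)" using False by (intro power_mono) auto
    also have "\<dots> = 4^n * x^(2*n)"
      by (simp add: power_mult_distrib power_mult power2_abs)
    also have "\<dots> \<le> 4^n * (1 + x^(2*n))" by simp
    finally show ?thesis .
  qed
  finally show ?thesis .
qed


lemma Tpoly_cont_aux: "continuous_on UNIV (Tpoly n) \<and> continuous_on UNIV (Tpoly (Suc n))"
proof (induction n)
  case 0
  have "Tpoly 0 = (\<lambda>x. 0)" "Tpoly (Suc 0) = (\<lambda>x. 1)" by (rule ext, simp)+
  then show ?case by (simp add: continuous_on_const)
next
  case (Suc n)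
  have "Tpoly (Suc (Suc n)) = (\<lambda>x. x * Tpoly (Suc n) x - Tpoly n x)" by (rule ext) simp
  then show ?case using Suc by (simp add: continuous_intros)
qed

lemma Tpoly_cont: "continuous_on UNIV (Tpoly n)"
  using Tpoly_cont_aux by blast

lemma jacobi_moment_0: "jacobi_moment a b 0 = 1"
  by (simp add: jacobi_moment_def e1_def)

lemma sol_real_dist:
  assumes "moment_solution (jacobi_moment a b) \<sigma>"
  shows "real_distribution \<sigma>"
proof -
  have s: "sets \<sigma> = sets borel" and i0: "integrable \<sigma> (\<lambda>x. x^0)" and v0: "(\<integral>x. x^0 \<partial>\<sigma>) = jacobi_moment a b 0"
    using assms unfolding moment_solution_def by blast+
  have i: "integrable \<sigma> (\<lambda>x. 1::real)" using i0 by simp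
  have v: "(\<integral>x. 1 \<partial>\<sigma>) = (1::real)" using v0 by (simp add: jacobi_moment_0)
  have "(\<integral>\<^sup>+x. ennreal 1 \<partial>\<sigma>) = ennreal (\<integral>x. 1 \<partial>\<sigma>)"
    by (rule nn_integral_eq_integral[OF i]) auto
  then have "emeasure \<sigma> (space \<sigma>) = 1" using v by (simp add: nn_integral_const)
  then have "prob_space \<sigma>" by (rule prob_spaceI)
  then show ?thesis using s by (simp add: real_distribution_def real_distribution_axioms_def)
qed



theorem mainTheorem2:
  fixes a b :: "nat \<Rightarrow> real" and \<rho> :: "real measure" and M :: real
  assumes "a 0 = 1"
    and "\<And>n. n \<ge> 1 \<Longrightarrow> a n > 0"
    and "moment_solution (jacobi_moment a b) \<rho>"
    and "\<And>T. T \<ge> 1 \<Longrightarrow> largest_eigenvalue (C_mat \<rho> T) \<le> M"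
  shows "\<forall>\<sigma>. moment_solution (jacobi_moment a b) \<sigma> \<longrightarrow> \<sigma> = \<rho>"
proof (intro allI impI)
  fix \<sigma> assume \<sigma>: "moment_solution (jacobi_moment a b) \<sigma>"
  let ?s = "jacobi_moment a b"
  have \<rho>s: "sets \<rho> = sets borel" and \<rho>i: "\<And>k. integrable \<rho> (\<lambda>x. x^k)"
    and \<rho>m: "\<And>k. (\<integral>x. x^k \<partial>\<rho>) = ?s k"
    using assms(3) unfolding moment_solution_def by blast+
  interpret R: real_distribution \<rho> by (rule sol_real_dist[OF assms(3)])
  have spR: "space \<rho> = UNIV" using sets_eq_imp_space_eq[OF \<rho>s] by simp
  have measT: "(\<lambda>x. Tpoly n x * Tpoly n x) \<in> borel_measurable \<rho>" for n
  proof -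
    have "Tpoly n \<in> borel_measurable borel" by (rule borel_measurable_continuous_onI[OF Tpoly_cont])
    then have "(\<lambda>x. Tpoly n x * Tpoly n x) \<in> borel_measurable borel" by measurable
    then show ?thesis using measurable_cong_sets[OF \<rho>s refl] by blast
  qed
  have intT: "integrable \<rho> (\<lambda>x. Tpoly n x * Tpoly n x)" for n
  proof -
    have "integrable \<rho> (\<lambda>x. 4^n * (1 + x^(2*n)))" using \<rho>i
      by (intro integrable_mult_right Bochner_Integration.integrable_add) auto
    then show ?thesis
    proof (rule Bochner_Integration.integrable_bound[OF _ measT])
      show "AE x in \<rho>. norm (Tpoly n x * Tpoly n x) \<le> norm (4^n * (1 + x^(2*n)))"
      proof (intro AE_I2)
        fix x :: real
        have "0 \<le> x^(2*n)" by (simp add: power_mult)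
        then have "0 \<le> (4::real)^n * (1 + x^(2*n))" by simp
        moreover have "0 \<le> Tpoly n x * Tpoly n x" by simp
        ultimately show "norm (Tpoly n x * Tpoly n x) \<le> norm (4^n * (1 + x^(2*n)))"
          using Tpoly_sq_bound[of n x] by simp
      qed
    qed
  qed
  have diag: "(\<integral>x. Tpoly n x * Tpoly n x \<partial>\<rho>) \<le> M" if n: "n \<ge> 1" for n
  proof -
    have C: "C_mat \<rho> n \<in> carrier_mat n n" by (simp add: C_mat_def)
    have sym: "C_mat \<rho> n $$ (i, j) = C_mat \<rho> n $$ (j, i)" if "i < n" "j < n" for i j
      using that by (simp add: C_mat_def mult.commute)
    have "C_mat \<rho> n $$ (n - 1, n - 1) \<le> largest_eigenvalue (C_mat \<rho> n)"
      by (rule rayleigh[OF C sym]) (use n in auto)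
    moreover have "C_mat \<rho> n $$ (n - 1, n - 1) = (\<integral>x. Tpoly n x * Tpoly n x \<partial>\<rho>)"
      using n by (simp add: C_mat_def)
    ultimately show ?thesis using assms(4)[OF n] by simp
  qed
  define S where "S = {x::real. 2 \<le> \<bar>x\<bar>}"
  have Sb: "S \<in> sets borel" unfolding S_def by measurable
  then have Ss: "S \<in> sets \<rho>" using \<rho>s by simp
  have bnd: "measure \<rho> S * (real n)^2 \<le> M" if n: "n \<ge> 1" for n
  proof -
    have "(\<integral>x. indicator S x * (real n)^2 \<partial>\<rho>) \<le> (\<integral>x. Tpoly n x * Tpoly n x \<partial>\<rho>)"
    proof (rule integral_mono)
      show "integrable \<rho> (\<lambda>x. indicator S x * (real n)^2)"
        using Ss by (intro integrable_mult_left integrable_real_indicator) (auto simp: R.emeasure_eq_measure)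
      show "integrable \<rho> (\<lambda>x. Tpoly n x * Tpoly n x)" by (rule intT)
      fix x :: real
      show "indicator S x * (real n)^2 \<le> Tpoly n x * Tpoly n x"
      proof (cases "x \<in> S")
        case True
        then have "real n \<le> \<bar>Tpoly n x\<bar>" using Tpoly_lower by (simp add: S_def)
        then have "(real n)^2 \<le> \<bar>Tpoly n x\<bar>^2" by (intro power_mono) auto
        then show ?thesis using True by (simp add: power2_eq_square)
      qed simp
    qed
    also have "\<dots> \<le> M" by (rule diag[OF n])
    finally show ?thesis using spR by simp
  qed
  have m0: "measure \<rho> S = 0"
  proof (rule ccontr)
    assume "measure \<rho> S \<noteq> 0"
    then have m: "measure \<rho> S > 0" using measure_nonneg[of \<rho> S] by linarith
    define n where "n = nat \<lceil>\<bar>M\<bar> / measure \<rho> S\<rceil> + 1"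
    have n1: "n \<ge> 1" by (simp add: n_def)
    have "\<bar>M\<bar> / measure \<rho> S < real n" unfolding n_def by linarith
    then have "\<bar>M\<bar> < measure \<rho> S * real n" using m by (simp add: field_simps)
    also have "real n \<le> (real n)^2" using n1 by (simp add: power2_eq_square)
    then have "measure \<rho> S * real n \<le> measure \<rho> S * (real n)^2" using m by simp
    finally have "\<bar>M\<bar> < measure \<rho> S * (real n)^2" .
    with bnd[OF n1] show False by linarith
  qed
  have "S \<in> null_sets \<rho>" using Ss m0 by (simp add: R.emeasure_eq_measure null_sets_def)
  then have AE\<rho>: "AE x in \<rho>. \<bar>x\<bar> < 2" using AE_not_in[of S \<rho>] by (auto simp: S_def)
  have momb: "?s (2*k) \<le> 4^k" for k
  proof -
    have "?s (2*k) = (\<integral>x. x^(2*k) \<partial>\<rho>)" by (simp add: \<rho>m)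
    also have "\<dots> \<le> (\<integral>x. 4^k \<partial>\<rho>)"
    proof (rule integral_mono_AE)
      show "integrable \<rho> (\<lambda>x. x^(2*k))" by (rule \<rho>i)
      show "integrable \<rho> (\<lambda>x. 4^k)" by simp
      show "AE x in \<rho>. x^(2*k) \<le> 4^k" using AE\<rho>
      proof (rule AE_mp, intro AE_I2 impI)
        fix x :: real assume "\<bar>x\<bar> < 2"
        then have "\<bar>x\<bar>^2 \<le> 2^2" by (intro power_mono) auto
        then have "x^2 \<le> 4" by simp
        then have "(x^2)^k \<le> 4^k" by (intro power_mono) auto
        then show "x^(2*k) \<le> 4^k" by (simp add: power_mult)
      qed
    qed
    also have "\<dots> = 4^k" using R.prob_space spR by simp
    finally show ?thesis .
  qed
  have absm: "(\<integral>x. \<bar>x\<bar>^k \<partial>N) \<le> 1 + 4^k" if N: "moment_solution ?s N" for N k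
  proof -
    interpret N: real_distribution N by (rule sol_real_dist[OF N])
    have Ni: "\<And>k. integrable N (\<lambda>x. x^k)" and Nm: "\<And>k. (\<integral>x. x^k \<partial>N) = ?s k"
      using N unfolding moment_solution_def by blast+
    have spN: "space N = UNIV" using sets_eq_imp_space_eq[OF N.events_eq_borel] by simp
    have pN: "measure N UNIV = 1" using N.prob_space spN by simp
    have "(\<integral>x. 1 + x^(2*k) \<partial>N) = (\<integral>x. 1 \<partial>N) + (\<integral>x. x^(2*k) \<partial>N)"
      using Ni by (intro Bochner_Integration.integral_add) auto
    also have "\<dots> = 1 + ?s (2*k)" using pN spN by (simp add: Nm)
    finally have int1: "(\<integral>x. 1 + x^(2*k) \<partial>N) = 1 + ?s (2*k)" .
    have "(\<integral>x. \<bar>x\<bar>^k \<partial>N) \<le> (\<integral>x. 1 + x^(2*k) \<partial>N)"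
    proof (rule integral_mono)
      show "integrable N (\<lambda>x. \<bar>x\<bar>^k)" unfolding power_abs[symmetric] using Ni by auto
      show "integrable N (\<lambda>x. 1 + x^(2*k))" using Ni by auto
      fix x :: real
      show "\<bar>x\<bar>^k \<le> 1 + x^(2*k)"
      proof (cases "\<bar>x\<bar> \<le> 1")
        case True
        then have "\<bar>x\<bar>^k \<le> 1" by (simp add: power_le_one)
        moreover have "0 \<le> x^(2*k)" by (simp add: power_mult)
        ultimately show ?thesis by linarith
      next
        case False
        then have "\<bar>x\<bar>^k \<le> \<bar>x\<bar>^(2*k)" by (intro power_increasing) auto
        then show ?thesis by (simp add: power_abs power_mult)
      qed
    qed
    also have "\<dots> = 1 + ?s (2*k)" by (rule int1)
    also have "\<dots> \<le> 1 + 4^k" using momb[of k] by simp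
    finally show ?thesis .
  qed
  have capx: "cmod (char N t - (\<Sum>k\<le>n. ((\<i> * t)^k / fact k) * ?s k)) \<le> 2*\<bar>t\<bar>^n / fact n * (1 + 4^n)"
    if N: "moment_solution ?s N" for N t n
  proof -
    interpret N: real_distribution N by (rule sol_real_dist[OF N])
    have Ni: "\<And>k. integrable N (\<lambda>x. x^k)" and Nm: "\<And>k. (\<integral>x. x^k \<partial>N) = ?s k"
      using N unfolding moment_solution_def by blast+
    have "cmod (char N t - (\<Sum>k\<le>n. ((\<i> * t)^k / fact k) * ?s k)) \<le>
        (2*\<bar>t\<bar>^n / fact n) * (\<integral>x. \<bar>x\<bar>^n \<partial>N)"
      using N.char_approx1[of n t] Ni by (simp add: Nm)
    also have "\<dots> \<le> 2*\<bar>t\<bar>^n / fact n * (1 + 4^n)"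
      by (intro mult_left_mono absm[OF N]) auto
    finally show ?thesis .
  qed
  have "char \<sigma> t = char \<rho> t" for t
  proof -
    define c where "c = 4 * \<bar>t\<bar> + 1"
    define d where "d = cmod (char \<sigma> t - char \<rho> t)"
    have le: "d \<le> 8 * (inverse (fact n) * c^n)" for n
    proof -
      let ?P = "(\<Sum>k\<le>n. ((\<i> * t)^k / fact k) * ?s k)"
      have "d = cmod ((char \<sigma> t - ?P) - (char \<rho> t - ?P))" by (simp add: d_def)
      also have "\<dots> \<le> cmod (char \<sigma> t - ?P) + cmod (char \<rho> t - ?P)" by (rule norm_triangle_ineq4)
      also have "\<dots> \<le> 2 * (2*\<bar>t\<bar>^n / fact n * (1 + 4^n))"
        using capx[OF \<sigma>, of t n] capx[OF assms(3), of t n] by simp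
      also have "\<dots> = 4 * (\<bar>t\<bar>^n * (1 + 4^n)) / fact n" by simp
      also have "\<dots> \<le> 4 * (2 * c^n) / fact n"
      proof -
        have a1: "\<bar>t\<bar>^n \<le> c^n" unfolding c_def by (intro power_mono) auto
        have a2: "\<bar>t\<bar>^n * 4^n \<le> c^n" unfolding c_def power_mult_distrib[symmetric]
          by (intro power_mono) auto
        have "\<bar>t\<bar>^n * (1 + 4^n) \<le> 2 * c^n" using a1 a2 by (simp add: algebra_simps)
        then show ?thesis by (intro divide_right_mono mult_left_mono) auto
      qed
      also have "\<dots> = 8 * (inverse (fact n) * c^n)" by (simp add: field_simps)
      finally show ?thesis .
    qed
    have "(\<lambda>n. inverse (fact n) * c^n) \<longlonglongrightarrow> 0"
      by (rule summable_LIMSEQ_zero[OF summable_exp])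
    then have lim8: "(\<lambda>n. 8 * (inverse (fact n) * c^n)) \<longlonglongrightarrow> 0"
      by (rule tendsto_mult_right_zero)
    have "d \<le> 0"
      by (rule tendsto_le[OF trivial_limit_sequentially lim8 tendsto_const]) (use le in auto)
    then have "d = 0" unfolding d_def by (simp add: antisym)
    then show ?thesis unfolding d_def by simp
  qed
  then have "char \<sigma> = char \<rho>" by (rule ext)
  then show "\<sigma> = \<rho>"
    using Levy_uniqueness[OF sol_real_dist[OF \<sigma>] sol_real_dist[OF assms(3)]] by blast
qed


end
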